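(* Let $0<\rho\le\infty$ and let $f(z)=\sum_{k\ge0}c_kz^k$ be a power series with real coefficients convergent on $D(0,\rho)$. Fix an integer $N\ge1$. If $f[A]$ is positive semidefinite for every $A\in\mathbb{P}^1_N((0,\rho))$, then the first $N$ non-zero Taylor coefficients $c_j$ of $f$ (or all of the non-zero ones, if there are fewer than $N$) are strictly positive.
   Context: $\mathbb{P}^1_N(I)$ is the set of $N\times N$ positive semidefinite matrices of rank at most one with all entries in $I$. $D(0,\rho)$ is the open disc of radius $\rho$ about $0$. For a matrix $A=(a_{jk})$, $f[A]:=(f(a_{jk}))$. *)

theory Defs
  imports "HOL-Analysis.Analysis"
begin

definition psd :: "real^'n^'n \<Rightarrow> bool" where
  "psd A \<longleftrightarrow> transpose A = A \<and> (\<forall>v. 0 \<le> v \<bullet> (A *v v))"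

text \<open>The set P^1_N(I): PSD matrices of rank at most one with all entries in I
  (N = CARD('n)).\<close>
definition P1 :: "real set \<Rightarrow> (real^'n^'n) set" where
  "P1 I = {A. psd A \<and> rank A \<le> 1 \<and> (\<forall>i j. A $ i $ j \<in> I)}"

definition entrywise :: "(real \<Rightarrow> real) \<Rightarrow> real^'n^'m \<Rightarrow> real^'n^'m" where
  "entrywise f A = (\<chi> i j. f (A $ i $ j))"

end

theory Submission
  imports Defs "HOL-Computational_Algebra.Polynomial"
begin

lemma poly_sum_lt:
  fixes p :: "real poly"
  assumes "degree p < N"
  shows "(\<Sum>d<N. coeff p d * y ^ d) = poly p y"
proof -
  have "poly p y = (\<Sum>d\<le>degree p. coeff p d * y ^ d)" by (rule poly_altdef)
  also have "\<dots> = (\<Sum>d<N. coeff p d * y ^ d)"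
    by (rule sum.mono_neutral_left) (use assms in \<open>auto simp: coeff_eq_0\<close>)
  finally show ?thesis by simp
qed

lemma outer_in_P1:
  fixes w :: "real^'n" and t :: real
  assumes "t \<ge> 0" "\<And>i j. t * w$i * w$j \<in> I"
  shows "(\<chi> i j. t * w$i * w$j) \<in> P1 I"
proof -
  let ?A = "(\<chi> i j. t * w$i * w$j) :: real^'n^'n"
  have Av: "?A *v v = (t * (w \<bullet> v)) *\<^sub>R w" for v
    by (simp add: matrix_vector_mult_def inner_vec_def vec_eq_iff sum_distrib_left
        sum_distrib_right algebra_simps)
  have "psd ?A"
    unfolding psd_def
  proof
    show "transpose ?A = ?A" by (simp add: transpose_def vec_eq_iff algebra_simps)
    show "\<forall>v. 0 \<le> v \<bullet> (?A *v v)"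
    proof
      fix v
      have "v \<bullet> (?A *v v) = t * ((w \<bullet> v) * (w \<bullet> v))" by (simp add: Av inner_commute)
      thus "0 \<le> v \<bullet> (?A *v v)" using assms(1) by simp
    qed
  qed
  moreover have "rank ?A \<le> 1"
  proof -
    have "range (\<lambda>v. ?A *v v) \<subseteq> span {w}"
      by (auto simp: Av span_breakdown_eq intro: span_mul span_base)
    hence "dim (range (\<lambda>v. ?A *v v)) \<le> card {w}"
      by (intro dim_le_card) auto
    thus ?thesis by (simp add: rank_dim_range)
  qed
  ultimately show ?thesis using assms(2) by (simp add: P1_def)
qed

lemma quad_form:
  fixes v w :: "real^'n" and c :: "nat \<Rightarrow> real"
  assumes sm: "\<And>i l. summable (\<lambda>k. c k * (t * w$i * w$l) ^ k)"
  shows "(\<lambda>k. c k * t ^ k * (\<Sum>i\<in>UNIV. v$i * w$i ^ k)\<^sup>2) sums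
     (v \<bullet> (entrywise (\<lambda>x. \<Sum>k. c k * x ^ k) (\<chi> i l. t * w$i * w$l) *v v))"
proof -
  have e: "v \<bullet> (entrywise (\<lambda>x. \<Sum>k. c k * x ^ k) (\<chi> i l. t * w$i * w$l) *v v)
     = (\<Sum>i\<in>UNIV. \<Sum>l\<in>UNIV. v$i * v$l * (\<Sum>k. c k * (t * w$i * w$l) ^ k))"
    by (simp add: entrywise_def matrix_vector_mult_def inner_vec_def sum_distrib_left algebra_simps)
  have "(\<lambda>k. \<Sum>i\<in>UNIV. \<Sum>l\<in>UNIV. v$i * v$l * (c k * (t * w$i * w$l) ^ k)) sums
      (\<Sum>i\<in>UNIV. \<Sum>l\<in>UNIV. v$i * v$l * (\<Sum>k. c k * (t * w$i * w$l) ^ k))"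
    by (intro sums_sum sums_mult summable_sums sm)
  moreover have "(\<Sum>i\<in>UNIV. \<Sum>l\<in>UNIV. v$i * v$l * (c k * (t * w$i * w$l) ^ k))
       = c k * t ^ k * (\<Sum>i\<in>UNIV. v$i * w$i ^ k)\<^sup>2" for k
    by (simp add: power2_eq_square sum_product sum_distrib_left power_mult_distrib algebra_simps)
  ultimately show ?thesis using e by simp
qed

lemma powser_head_nonneg:
  fixes b :: "nat \<Rightarrow> real"
  assumes K: "0 < K" and bz: "\<And>k. k < j \<Longrightarrow> b k = 0"
    and sK: "summable (\<lambda>k. \<bar>b k\<bar> * K ^ k)"
    and pos: "\<And>t. 0 < t \<Longrightarrow> t < K \<Longrightarrow> 0 \<le> (\<Sum>k. b k * t ^ k)"
  shows "0 \<le> b j"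
proof -
  define h where "h t = (\<Sum>k. b (k + j) * t ^ k)" for t :: real
  have s1: "summable (\<lambda>k. \<bar>b (k + j)\<bar> * K ^ (k + j))"
    using summable_ignore_initial_segment[OF sK, of j] by simp
  have "summable (\<lambda>k. (\<bar>b (k + j)\<bar> * K ^ (k + j)) / K ^ j)"
    using summable_divide[OF s1] .
  moreover have "(\<bar>b (k + j)\<bar> * K ^ (k + j)) / K ^ j = \<bar>b (k + j) * K ^ k\<bar>" for k
    using K by (simp add: power_add abs_mult)
  ultimately have s2: "summable (\<lambda>k. \<bar>b (k + j) * K ^ k\<bar>)" by simp
  hence s3: "summable (\<lambda>k. b (k + j) * K ^ k)" by (rule summable_rabs_cancel)
  have cont: "isCont h 0" unfolding h_def
    by (rule isCont_powser[OF s3]) (use K in simp)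
  have h0: "h 0 = b j" unfolding h_def using powser_zero[of "\<lambda>k. b (k + j)"] by simp
  have hpos: "0 \<le> h t" if t: "0 < t" "t < K" for t
  proof -
    have st: "summable (\<lambda>k. b k * t ^ k)"
    proof (rule summable_rabs_cancel, rule summable_comparison_test[OF _ sK])
      show "\<exists>N. \<forall>n\<ge>N. norm \<bar>b n * t ^ n\<bar> \<le> \<bar>b n\<bar> * K ^ n"
        using t by (auto simp: abs_mult intro!: mult_left_mono power_mono)
    qed
    have sm: "summable (\<lambda>k. b (k + j) * t ^ k)"
      proof (rule summable_rabs_cancel, rule summable_comparison_test[OF _ s2])
        show "\<exists>N. \<forall>n\<ge>N. norm \<bar>b (n + j) * t ^ n\<bar> \<le> \<bar>b (n + j) * K ^ n\<bar>"
          using t by (auto simp: abs_mult intro!: mult_left_mono power_mono)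
      qed
    have "(\<Sum>k. b k * t ^ k) = (\<Sum>k. b (k + j) * t ^ (k + j)) + (\<Sum>i<j. b i * t ^ i)"
      by (rule suminf_split_initial_segment[OF st])
    also have "(\<Sum>i<j. b i * t ^ i) = 0" using bz by simp
    also have "(\<Sum>k. b (k + j) * t ^ (k + j)) = (\<Sum>k. t ^ j * (b (k + j) * t ^ k))"
      by (simp add: power_add algebra_simps)
    also have "\<dots> = t ^ j * h t" unfolding h_def
      by (rule suminf_mult[OF sm])
    finally have "0 \<le> t ^ j * h t" using pos[OF t] by simp
    moreover have "0 < t ^ j" using t by simp
    ultimately show ?thesis by (simp add: zero_le_mult_iff)
  qed
  have "(h \<longlongrightarrow> h 0) (at_right 0)"
    using cont by (simp add: isCont_def filterlim_at_split)
  moreover have "eventually (\<lambda>t. 0 \<le> h t) (at_right (0::real))"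
    unfolding eventually_at_right_field using K hpos by blast
  ultimately have "0 \<le> h 0"
    by (rule tendsto_lowerbound) simp
  thus ?thesis using h0 by simp
qed


theorem lemma1p3:
  fixes c :: "nat \<Rightarrow> real" and \<rho> :: ereal and N :: nat
  assumes "0 < \<rho>"
    and "\<And>z::complex. ereal (norm z) < \<rho> \<Longrightarrow> summable (\<lambda>k. complex_of_real (c k) * z ^ k)"
    and "CARD('n::finite) = N"
    and "\<And>A::real^'n^'n. A \<in> P1 {x. 0 < x \<and> ereal x < \<rho>} \<Longrightarrow>
           psd (entrywise (\<lambda>x. \<Sum>k. c k * x ^ k) A)"
  shows "\<forall>j. c j \<noteq> 0 \<and> card {k. k < j \<and> c k \<noteq> 0} < N \<longrightarrow> 0 < c j"
proof (intro allI impI, elim conjE)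
  fix j assume cj: "c j \<noteq> 0" and cardS: "card {k. k < j \<and> c k \<noteq> 0} < N"
  obtain K0 where K0: "0 < K0" "ereal K0 < \<rho>"
    using ereal_dense2[OF assms(1)] by (metis ereal_less(2) not_le order.strict_trans2 zero_ereal_def less_imp_le ereal_less_eq(3))
  have "summable (\<lambda>k. complex_of_real (c k) * complex_of_real K0 ^ k)"
    using assms(2)[of "complex_of_real K0"] K0 by simp
  hence "summable (\<lambda>k. complex_of_real (c k * K0 ^ k))" by simp
  hence sK0: "summable (\<lambda>k. c k * K0 ^ k)" by (simp only: summable_of_real_iff)
  have absum: "summable (\<lambda>k. \<bar>c k * s ^ k\<bar>)" if "\<bar>s\<bar> < K0" for s
    using powser_insidea[OF sK0, of s] that K0 by simp
  define K where "K = K0 / 2"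
  have K: "0 < K" "K < K0" using K0 by (auto simp: K_def)
  define x :: real where "x = 1/2"
  obtain e where e: "bij_betw e (UNIV::'n set) {0..<N}"
    using ex_bij_betw_finite_nat[of "UNIV::'n set"] assms(3) by auto
  define S where "S = {k. k < j \<and> c k \<noteq> 0}"
  have finS: "finite S" by (simp add: S_def)
  define p :: "real poly" where "p = (\<Prod>k\<in>S. [:-(x^k), 1:])"
  have degp: "degree p < N"
  proof -
    have "degree p \<le> sum (degree \<circ> (\<lambda>k. [:-(x^k), 1:])) S"
      unfolding p_def by (rule degree_prod_sum_le[OF finS])
    also have "\<dots> = card S" by simp
    finally show ?thesis using cardS unfolding S_def by simp
  qed
  define w :: "real^'n" where "w = (\<chi> i. x ^ e i)"
  define v :: "real^'n" where "v = (\<chi> i. coeff p (e i))"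
  have vw: "(\<Sum>i\<in>UNIV. v$i * w$i ^ k) = poly p (x ^ k)" for k
  proof -
    have "(\<Sum>i\<in>UNIV. v$i * w$i ^ k) = (\<Sum>i\<in>UNIV. coeff p (e i) * (x ^ k) ^ e i)"
      by (simp add: v_def w_def power_mult[symmetric] mult.commute)
    also have "\<dots> = (\<Sum>d\<in>{0..<N}. coeff p d * (x ^ k) ^ d)"
      by (rule sum.reindex_bij_betw[OF e])
    also have "\<dots> = poly p (x ^ k)"
      using poly_sum_lt[OF degp, of "x^k"] by (simp add: lessThan_atLeast0)
    finally show ?thesis .
  qed
  define b where "b k = c k * (poly p (x ^ k))\<^sup>2" for k
  have xinj: "x ^ k \<noteq> x ^ j" if "k < j" for k
  proof -
    have "x ^ j < x ^ k" using that by (intro power_strict_decreasing) (auto simp: x_def)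
    thus ?thesis by simp
  qed
  have bz: "b k = 0" if "k < j" for k
  proof (cases "c k = 0")
    case False
    hence "k \<in> S" using that by (simp add: S_def)
    hence "poly p (x ^ k) = 0" by (simp add: p_def poly_prod finS) blast
    thus ?thesis by (simp add: b_def)
  qed (simp add: b_def)
  have pj: "poly p (x ^ j) \<noteq> 0"
    using xinj by (auto simp: p_def poly_prod finS S_def) (metis xinj)
  have wb: "\<bar>w$i\<bar> \<le> 1" "0 < w$i" for i by (auto simp: w_def x_def power_le_one)
  define G where "G = (\<Sum>i\<in>UNIV. \<bar>v$i\<bar>)\<^sup>2"
  have gb: "(poly p (x ^ k))\<^sup>2 \<le> G" for k
  proof -
    have "\<bar>\<Sum>i\<in>UNIV. v$i * w$i ^ k\<bar> \<le> (\<Sum>i\<in>UNIV. \<bar>v$i\<bar>)"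
    proof -
      have "\<bar>\<Sum>i\<in>UNIV. v$i * w$i ^ k\<bar> \<le> (\<Sum>i\<in>UNIV. \<bar>v$i * w$i ^ k\<bar>)" by (rule sum_abs)
      also have "\<dots> \<le> (\<Sum>i\<in>UNIV. \<bar>v$i\<bar>)"
        by (intro sum_mono) (auto simp: abs_mult power_abs intro!: mult_left_le power_le_one wb)
      finally show ?thesis .
    qed
    hence "\<bar>poly p (x ^ k)\<bar> \<le> (\<Sum>i\<in>UNIV. \<bar>v$i\<bar>)" by (simp add: vw)
    hence "\<bar>poly p (x ^ k)\<bar>\<^sup>2 \<le> (\<Sum>i\<in>UNIV. \<bar>v$i\<bar>)\<^sup>2" by (intro power_mono) auto
    thus ?thesis by (simp add: G_def)
  qed
  have sK: "summable (\<lambda>k. \<bar>b k\<bar> * K ^ k)"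
  proof (rule summable_comparison_test[OF _ summable_mult[OF absum[of K], of G]])
    show "\<exists>N. \<forall>n\<ge>N. norm (\<bar>b n\<bar> * K ^ n) \<le> G * \<bar>c n * K ^ n\<bar>"
    proof (intro exI allI impI)
      fix n :: nat
      have "\<bar>c n\<bar> * (poly p (x ^ n))\<^sup>2 * K ^ n \<le> \<bar>c n\<bar> * G * K ^ n"
        using K gb[of n] by (intro mult_right_mono mult_left_mono) auto
      thus "norm (\<bar>b n\<bar> * K ^ n) \<le> G * \<bar>c n * K ^ n\<bar>"
        using K by (simp add: b_def abs_mult mult_ac)
    qed
  qed (use K in auto)
  have pos: "0 \<le> (\<Sum>k. b k * t ^ k)" if t: "0 < t" "t < K" for t
  proof -
    have sm: "summable (\<lambda>k. c k * (t * w$i * w$l) ^ k)" for i l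
    proof (rule summable_rabs_cancel, rule absum)
      have "\<bar>t * w$i * w$l\<bar> \<le> t" using wb[of i] wb[of l] t
        by (simp add: abs_mult mult_le_one mult_left_le)
      thus "\<bar>t * w$i * w$l\<bar> < K0" using t K by simp
    qed
    have sumeq: "(\<lambda>k. b k * t ^ k) sums (v \<bullet> (entrywise (\<lambda>x. \<Sum>k. c k * x ^ k) (\<chi> i l. t * w$i * w$l) *v v))"
    proof -
      have "c k * t ^ k * (\<Sum>i\<in>UNIV. v$i * w$i ^ k)\<^sup>2 = b k * t ^ k" for k
        by (simp only: vw b_def mult_ac)
      hence "(\<lambda>k. c k * t ^ k * (\<Sum>i\<in>UNIV. v$i * w$i ^ k)\<^sup>2) = (\<lambda>k. b k * t ^ k)" by (rule ext)
      thus ?thesis using quad_form[of c t w v, OF sm] by (simp only:)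
    qed
    have "(\<chi> i l. t * w$i * w$l) \<in> P1 {x. 0 < x \<and> ereal x < \<rho>}"
    proof (rule outer_in_P1)
      show "0 \<le> t" using t by simp
      fix i l
      have "t * w$i * w$l \<le> t" using wb[of i] wb[of l] t
        by (simp add: mult_le_one mult_left_le)
      hence "t * w$i * w$l < K0" using t K by linarith
      hence "ereal (t * w$i * w$l) < ereal K0" by simp
      also have "\<dots> < \<rho>" by (rule K0(2))
      finally show "t * w$i * w$l \<in> {x. 0 < x \<and> ereal x < \<rho>}" using wb[of i] wb[of l] t by simp
    qed
    hence "psd (entrywise (\<lambda>x. \<Sum>k. c k * x ^ k) (\<chi> i l. t * w$i * w$l))" by (rule assms(4))
    hence "0 \<le> v \<bullet> (entrywise (\<lambda>x. \<Sum>k. c k * x ^ k) (\<chi> i l. t * w$i * w$l) *v v)"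
      unfolding psd_def by blast
    thus ?thesis using sums_unique[OF sumeq] by simp
  qed
  have "0 \<le> b j" by (rule powser_head_nonneg[OF K(1) bz sK pos])
  moreover have "0 < (poly p (x ^ j))\<^sup>2" using pj by simp
  ultimately have "0 \<le> c j" by (simp add: b_def zero_le_mult_iff)
  thus "0 < c j" using cj by simp
qed

end
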